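(* If $f\in\mathcal{C}$, then $0\le \det T_{3,1}(f)\le 1$, and both bounds are sharp.
   Context: $\mathbb{D}=\{z\in\mathbb{C}:|z|<1\}$. $\mathcal{A}$ is the class of analytic functions $f$ on $\mathbb{D}$ with $f(0)=0$, $f'(0)=1$, written $f(z)=z+a_2z^2+a_3z^3+\cdots$. $\mathcal{C}=\{f\in\mathcal{A}: \mathrm{Re}[1+zf''(z)/f'(z)]>0 \text{ for all } z\in\mathbb{D}\}$ is the class of convex functions. For $f\in\mathcal{A}$, $\det T_{3,1}(f)=2\,\mathrm{Re}(a_2^2\overline{a_3})-2|a_2|^2-|a_3|^2+1$ is the determinant of the Hermitian Toeplitz matrix $\begin{pmatrix}1&a_2&a_3\\ \overline{a_2}&1&a_2\\ \overline{a_3}&\overline{a_2}&1\end{pmatrix}$. *)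

theory Defs
  imports "HOL-Analysis.Analysis"
begin

definition unit_disc :: "complex set" where
  "unit_disc = ball 0 1"

definition taylor_coeff :: "(complex \<Rightarrow> complex) \<Rightarrow> nat \<Rightarrow> complex" where
  "taylor_coeff f n = (deriv ^^ n) f 0 / of_nat (fact n)"

definition class_A :: "(complex \<Rightarrow> complex) set" where
  "class_A = {f. f holomorphic_on unit_disc \<and> f 0 = 0 \<and> deriv f 0 = 1}"

text \<open>Class C of convex functions: Re(1 + z f''(z)/f'(z)) > 0 on the disc
  (the quotient being defined, i.e. f' nonvanishing).\<close>
definition class_C :: "(complex \<Rightarrow> complex) set" where
  "class_C = {f \<in> class_A. \<forall>z\<in>unit_disc. deriv f z \<noteq> 0 \<and>
      Re (1 + z * deriv (deriv f) z / deriv f z) > 0}"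

definition detT31 :: "(complex \<Rightarrow> complex) \<Rightarrow> real" where
  "detT31 f = (let a2 = taylor_coeff f 2; a3 = taylor_coeff f 3 in
     2 * Re (a2^2 * cnj a3) - 2 * (cmod a2)^2 - (cmod a3)^2 + 1)"

end

theory Submission
  imports Defs "HOL-Complex_Analysis.Complex_Analysis"
begin

lemma const_on_ball_deriv:
  assumes "\<And>z. norm z < 1 \<Longrightarrow> w z = \<alpha> * z"
  shows "deriv w 0 = \<alpha>"
proof -
  have "((\<lambda>z. \<alpha> * z) has_field_derivative \<alpha>) (at 0)"
    using DERIV_cmult_Id by blast
  then have "(w has_field_derivative \<alpha>) (at 0)"
    by (rule has_field_derivative_transform_within_open[where S="ball 0 1"]) (auto simp: assms)
  then show ?thesis by (rule DERIV_imp_deriv)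
qed

lemma schwarz_pick0:
  assumes holg: "g holomorphic_on ball 0 1"
    and lt: "\<And>z. norm z < 1 \<Longrightarrow> norm (z * g z) < 1"
  shows "norm (g 0) \<le> 1" "norm (deriv g 0) \<le> 1 - (norm (g 0))^2"
proof -
  define w where "w = (\<lambda>z. z * g z)"
  have holw: "w holomorphic_on ball 0 1" unfolding w_def by (intro holomorphic_intros holg)
  have w0: "w 0 = 0" by (simp add: w_def)
  have lt': "\<And>z. norm z < 1 \<Longrightarrow> norm (w z) < 1" using lt by (simp add: w_def)
  have dg: "\<And>z. norm z < 1 \<Longrightarrow> (g has_field_derivative deriv g z) (at z)"
    using holomorphic_derivI[OF holg open_ball] by simp
  have "(w has_field_derivative g 0) (at 0)"
    using DERIV_mult[OF DERIV_ident dg[of 0]] by (simp add: w_def)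
  then have dw0: "deriv w 0 = g 0" by (simp add: DERIV_imp_deriv)
  note SL = Schwarz_Lemma'[OF holw w0 lt']
  have S1: "\<And>z. norm z < 1 \<Longrightarrow> norm (w z) \<le> norm z" using SL by blast
  have S2: "norm (deriv w 0) \<le> 1" using SL by blast
  have S3: "\<And>z. norm z < 1 \<Longrightarrow> z \<noteq> 0 \<Longrightarrow> norm (w z) = norm z \<Longrightarrow> \<exists>\<alpha>. (\<forall>z. norm z < 1 \<longrightarrow> w z = \<alpha> * z) \<and> norm \<alpha> = 1"
    "norm (deriv w 0) = 1 \<Longrightarrow> \<exists>\<alpha>. (\<forall>z. norm z < 1 \<longrightarrow> w z = \<alpha> * z) \<and> norm \<alpha> = 1"
    using SL by blast+
  show g01: "norm (g 0) \<le> 1" using S2 dw0 by simp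
  have eqcase: "g 0 = \<alpha> \<and> (\<forall>z. norm z < 1 \<longrightarrow> g z = \<alpha>)"
    if "\<forall>z. norm z < 1 \<longrightarrow> w z = \<alpha> * z" for \<alpha>
  proof -
    have "g 0 = \<alpha>" using const_on_ball_deriv[of w \<alpha>] that dw0 by auto
    moreover have "g z = \<alpha>" if "norm z < 1" for z
      using that \<open>\<forall>z. _\<close> \<open>g 0 = \<alpha>\<close> by (cases "z = 0") (auto simp: w_def)
    ultimately show ?thesis by auto
  qed
  show "norm (deriv g 0) \<le> 1 - (norm (g 0))^2"
  proof (cases "norm (g 0) = 1")
    case True
    then obtain \<alpha> where \<alpha>: "\<forall>z. norm z < 1 \<longrightarrow> w z = \<alpha> * z"
      using S3(2) dw0 by auto
    then have gc: "\<And>z. norm z < 1 \<Longrightarrow> g z = \<alpha>" using eqcase by blast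
    have "((\<lambda>z. \<alpha>) has_field_derivative 0) (at 0)" by simp
    then have "(g has_field_derivative 0) (at 0)"
      by (rule has_field_derivative_transform_within_open[where S="ball 0 1"]) (auto simp: gc)
    then have "deriv g 0 = 0" by (rule DERIV_imp_deriv)
    then show ?thesis using True by simp
  next
    case False
    define a where "a = g 0"
    have a1: "norm a < 1" using False g01 by (simp add: a_def)
    have glt: "norm (g z) < 1" if z: "norm z < 1" for z
    proof (cases "z = 0")
      case True then show ?thesis using a1 by (simp add: a_def)
    next
      case False
      have "norm (w z) \<le> norm z" using S1[OF z] .
      then have le: "norm (g z) \<le> 1" using False by (simp add: w_def norm_mult)
      show ?thesis
      proof (rule ccontr)
        assume "\<not> norm (g z) < 1"
        then have "norm (w z) = norm z" using le by (simp add: w_def norm_mult)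
        then obtain \<alpha> where \<alpha>: "\<forall>z. norm z < 1 \<longrightarrow> w z = \<alpha> * z" and n\<alpha>: "norm \<alpha> = 1"
          using S3(1)[OF z False] by blast
        then show False using eqcase[OF \<alpha>] a1 by (simp add: a_def)
      qed
    qed
    have den: "1 - cnj a * g z \<noteq> 0" if "norm z < 1" for z
    proof
      assume "1 - cnj a * g z = 0"
      then have "norm (cnj a * g z) = 1" by (metis eq_iff_diff_eq_0 norm_one)
      moreover have "norm (cnj a * g z) < 1"
      proof -
        have "norm a * norm (g z) \<le> norm a" using glt[OF that] by (intro mult_left_le) auto
        then show ?thesis using a1 by (simp add: norm_mult)
      qed
      ultimately show False by simp
    qed
    define G where "G = (\<lambda>z. (g z - a) / (1 - cnj a * g z))"
    have holG: "G holomorphic_on ball 0 1" unfolding G_def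
      by (intro holomorphic_intros holg) (use den in auto)
    have G0: "G 0 = 0" by (simp add: G_def a_def)
    have Glt: "norm (G z) < 1" if "norm z < 1" for z
      using Moebius_function_norm_lt_1[OF a1 glt[OF that], of 0]
      by (simp add: Moebius_function_simple G_def)
    have caa: "cnj a * a = of_real ((norm a)^2)" by (metis complex_norm_square mult.commute)
    have a2lt: "(norm a)^2 < 1" using a1 by (simp add: power_less_one_iff)
    have eq1: "1 - cnj a * a = of_real (1 - (norm a)^2)" using caa by simp
    have n1: "norm (1 - cnj a * a) = 1 - (norm a)^2" unfolding eq1 norm_of_real using a2lt by simp
    have nz: "1 - cnj a * a \<noteq> 0" using n1 a2lt by auto
    have "((\<lambda>z. (g z - a) / (1 - cnj a * g z)) has_field_derivative
        ((deriv g 0 - 0) * (1 - cnj a * g 0) - (g 0 - a) * (0 - cnj a * deriv g 0)) / ((1 - cnj a * g 0) * (1 - cnj a * g 0))) (at 0)"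
      by (rule DERIV_divide[OF DERIV_diff[OF dg[of 0] DERIV_const[of a]] DERIV_diff[OF DERIV_const[of 1] DERIV_cmult[OF dg[of 0], of "cnj a"]]])
        (use den[of 0] in auto)
    then have "(G has_field_derivative deriv g 0 / (1 - cnj a * a)) (at 0)"
      using nz unfolding G_def by (simp add: a_def[symmetric])
    then have "deriv G 0 = deriv g 0 / (1 - cnj a * a)"
      by (rule DERIV_imp_deriv)
    moreover have "norm (deriv G 0) \<le> 1" using Schwarz_Lemma(2)[OF holG G0 Glt, of 0] by simp
    ultimately have "norm (deriv g 0) \<le> norm (1 - cnj a * a)"
      using nz by (simp add: norm_divide divide_le_eq)
    also have "norm (1 - cnj a * a) = 1 - (norm a)^2" by (rule n1)
    finally show ?thesis by (simp add: a_def)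
  qed
qed


lemma det_alg:
  fixes a2 a3 :: complex
  assumes h1: "norm a2 \<le> 1" and h2: "norm (3 * (a3 - a2^2)) \<le> 1 - (norm a2)^2"
  shows "0 \<le> 2 * Re (a2^2 * cnj a3) - 2 * (cmod a2)^2 - (cmod a3)^2 + 1
    \<and> 2 * Re (a2^2 * cnj a3) - 2 * (cmod a2)^2 - (cmod a3)^2 + 1 \<le> 1"
proof -
  have idt: "2 * Re (a2^2 * cnj a3) - 2 * (cmod a2)^2 - (cmod a3)^2 + 1
      = (1 - (norm a2)^2)^2 - (norm (a3 - a2^2))^2"
    unfolding cmod_power2 by (simp add: power2_eq_square algebra_simps)
  define s where "s = 1 - (norm a2)^2"
  define t where "t = norm (a3 - a2^2)"
  have s0: "0 \<le> s" using h1 by (simp add: s_def abs_square_le_1)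
  have s1: "s \<le> 1" by (simp add: s_def)
  have t0: "0 \<le> t" by (simp add: t_def)
  have "norm (3 * (a3 - a2^2)) = 3 * t" unfolding t_def norm_mult by simp
  then have ts: "3 * t \<le> s" using h2 by (simp add: s_def)
  have "t * t \<le> s * s" using ts t0 by (intro mult_mono) auto
  moreover have "s * s \<le> 1" using s0 s1 by (simp add: mult_le_one)
  moreover have "0 \<le> t * t" by simp
  ultimately have "0 \<le> s * s - t * t \<and> s * s - t * t \<le> 1" by linarith
  then show ?thesis unfolding idt s_def[symmetric] t_def[symmetric]
    by (simp add: power2_eq_square)
qed

lemma main_bound:
  assumes "f \<in> class_C"
  shows "0 \<le> detT31 f \<and> detT31 f \<le> 1"
proof -
  have holf: "f holomorphic_on ball 0 1" and f'0: "deriv f 0 = 1"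
    and C: "\<And>z. norm z < 1 \<Longrightarrow> deriv f z \<noteq> 0 \<and> Re (1 + z * deriv (deriv f) z / deriv f z) > 0"
    using assms by (auto simp: class_C_def class_A_def unit_disc_def)
  define f1 where "f1 = deriv f"
  define f2 where "f2 = deriv f1"
  define f3 where "f3 = deriv f2"
  have hol1: "f1 holomorphic_on ball 0 1" unfolding f1_def by (intro holomorphic_deriv holf open_ball)
  have hol2: "f2 holomorphic_on ball 0 1" unfolding f2_def by (intro holomorphic_deriv hol1 open_ball)
  have d1: "\<And>z. norm z < 1 \<Longrightarrow> (f1 has_field_derivative f2 z) (at z)"
    using holomorphic_derivI[OF hol1 open_ball] by (simp add: f2_def)
  have d2: "\<And>z. norm z < 1 \<Longrightarrow> (f2 has_field_derivative f3 z) (at z)"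
    using holomorphic_derivI[OF hol2 open_ball] by (simp add: f3_def)
  have f10: "f1 0 = 1" using f'0 by (simp add: f1_def)
  define g where "g = (\<lambda>z. f2 z / (2 * f1 z + z * f2 z))"
  have key: "2 * f1 z + z * f2 z \<noteq> 0 \<and> norm (z * g z) < 1" if z: "norm z < 1" for z
  proof -
    have n: "f1 z \<noteq> 0" and r: "Re (1 + z * f2 z / f1 z) > 0"
      using C[OF z] by (auto simp: f1_def f2_def)
    define q where "q = z * f2 z / f1 z"
    have hq: "2 * f1 z + z * f2 z = f1 z * (2 + q)" using n by (simp add: q_def field_simps)
    have rq: "Re q > -1" using r by (simp add: q_def)
    have ne: "2 + q \<noteq> 0"
    proof
      assume "2 + q = 0"
      then have "Re (2 + q) = 0" by simp
      then show False using rq by simp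
    qed
    have zg1: "z * g z = z * f2 z / (f1 z * (2 + q))" by (simp add: g_def hq)
    have zg: "z * g z = q / (2 + q)" unfolding zg1 by (simp add: q_def divide_divide_eq_left)
    have "(norm q)^2 < (norm (2 + q))^2"
      unfolding cmod_power2 using rq by (simp add: power2_eq_square algebra_simps)
    then have "norm q < norm (2 + q)" by (rule power2_less_imp_less) simp
    then have "norm (q / (2 + q)) < 1" using ne by (simp add: norm_divide divide_less_eq)
    then show ?thesis using hq n ne zg by simp
  qed
  have holg: "g holomorphic_on ball 0 1" unfolding g_def
    by (intro holomorphic_intros hol1 hol2) (use key in auto)
  have SP: "norm (g 0) \<le> 1" "norm (deriv g 0) \<le> 1 - (norm (g 0))^2"
    using schwarz_pick0[OF holg] key by auto
  have g0: "g 0 = f2 0 / 2" by (simp add: g_def f10)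
  have dden: "((\<lambda>z. 2 * f1 z + z * f2 z) has_field_derivative 2 * f2 0 + (1 * f2 0 + f3 0 * 0)) (at 0)"
    by (rule DERIV_add[OF DERIV_cmult[OF d1] DERIV_mult[OF DERIV_ident d2]]) auto
  have "(g has_field_derivative (f3 0 * (2 * f1 0 + 0 * f2 0) - f2 0 * (2 * f2 0 + (1 * f2 0 + f3 0 * 0)))
        / ((2 * f1 0 + 0 * f2 0) * (2 * f1 0 + 0 * f2 0))) (at 0)"
    unfolding g_def by (rule DERIV_divide[OF d2 dden]) (auto simp: f10)
  then have "deriv g 0 = (2 * f3 0 - 3 * (f2 0)^2) / 4"
    by (simp add: DERIV_imp_deriv f10 power2_eq_square algebra_simps)
  have t2: "taylor_coeff f 2 = f2 0 / 2"
    by (simp add: taylor_coeff_def numeral_2_eq_2 f1_def f2_def)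
  have t3: "taylor_coeff f 3 = f3 0 / 6"
    by (simp add: taylor_coeff_def numeral_3_eq_3 f1_def f2_def f3_def fact_Suc)
  have G0: "g 0 = taylor_coeff f 2" by (simp add: g0 t2)
  have G1: "deriv g 0 = 3 * (taylor_coeff f 3 - (taylor_coeff f 2)^2)"
    unfolding \<open>deriv g 0 = _\<close> t2 t3 by (simp add: power2_eq_square field_simps)
  have A1: "norm (taylor_coeff f 2) \<le> 1" using SP(1) unfolding G0 .
  have A2: "norm (3 * (taylor_coeff f 3 - (taylor_coeff f 2)^2)) \<le> 1 - (norm (taylor_coeff f 2))^2"
    using SP(2) unfolding G0 G1 .
  show ?thesis using det_alg[OF A1 A2] by (simp add: detT31_def Let_def)
qed

lemma dpow:
  fixes z c :: complex
  assumes z: "z \<noteq> 1" and n: "0 < n"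
  shows "((\<lambda>z. c / (1 - z) ^ n) has_field_derivative c * of_nat n / (1 - z) ^ (n + 1)) (at z)"
proof -
  obtain m where m: "n = Suc m" using n by (cases n) auto
  have nz: "1 - z \<noteq> 0" using z by simp
  have "((\<lambda>z. c / (1 - z) ^ n) has_field_derivative
      (0 * (1 - z) ^ n - c * (of_nat n * ((0 - 1) * (1 - z) ^ (n - Suc 0)))) / ((1 - z) ^ n * (1 - z) ^ n)) (at z)"
    by (rule DERIV_divide[OF DERIV_const DERIV_power[OF DERIV_diff[OF DERIV_const DERIV_ident]]])
      (use nz in simp)
  moreover have "(0 * (1 - z) ^ n - c * (of_nat n * ((0 - 1) * (1 - z) ^ (n - Suc 0)))) / ((1 - z) ^ n * (1 - z) ^ n)
      = c * of_nat n / (1 - z) ^ (n + 1)"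
  proof -
    have "\<And>u::complex. u \<noteq> 0 \<Longrightarrow> (0 * u ^ Suc m - c * (of_nat (Suc m) * ((0 - 1) * u ^ (Suc m - Suc 0)))) / (u ^ Suc m * u ^ Suc m)
      = c * of_nat (Suc m) / u ^ (Suc m + 1)"
      by (simp add: field_simps)
    then show ?thesis using nz unfolding m by blast
  qed
  ultimately show ?thesis by simp
qed

lemma koebe_derivs:
  defines "f \<equiv> (\<lambda>z::complex. z / (1 - z))"
  shows "\<And>z. z \<noteq> 1 \<Longrightarrow> deriv f z = 1 / (1 - z)^2"
    and "\<And>z. z \<noteq> 1 \<Longrightarrow> deriv (deriv f) z = 2 / (1 - z)^3"
    and "deriv (deriv (deriv f)) 0 = 6"
proof -
  have opS: "open (- {1::complex})" by (intro open_Compl closed_singleton)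
  have d0: "(f has_field_derivative 1 / (1 - z)^2) (at z)" if "z \<noteq> 1" for z
  proof -
    have nz: "1 - z \<noteq> 0" using that by simp
    have "(f has_field_derivative (1 * (1 - z) - z * (0 - 1)) / ((1 - z) * (1 - z))) (at z)"
      unfolding f_def by (rule DERIV_divide[OF DERIV_ident DERIV_diff[OF DERIV_const DERIV_ident]]) (use nz in simp)
    then show ?thesis using nz by (simp add: power2_eq_square)
  qed
  show D1: "\<And>z. z \<noteq> 1 \<Longrightarrow> deriv f z = 1 / (1 - z)^2"
    using d0 DERIV_imp_deriv by blast
  have d1: "(deriv f has_field_derivative 2 / (1 - z)^3) (at z)" if "z \<noteq> 1" for z
  proof -
    have "((\<lambda>z. 1 / (1 - z) ^ 2) has_field_derivative 1 * of_nat 2 / (1 - z) ^ (2 + 1)) (at z)"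
      by (rule dpow) (use that in auto)
    then have "((\<lambda>z. 1 / (1 - z) ^ 2) has_field_derivative 2 / (1 - z) ^ 3) (at z)" by simp
    then show ?thesis
      by (rule has_field_derivative_transform_within_open[OF _ opS]) (use that D1 in auto)
  qed
  show D2: "\<And>z. z \<noteq> 1 \<Longrightarrow> deriv (deriv f) z = 2 / (1 - z)^3"
    using d1 DERIV_imp_deriv by blast
  have "((\<lambda>z. 2 / (1 - z) ^ 3) has_field_derivative 2 * of_nat 3 / (1 - 0) ^ (3 + 1)) (at (0::complex))"
    by (rule dpow) auto
  then have "((\<lambda>z. 2 / (1 - z) ^ 3) has_field_derivative 6) (at (0::complex))" by simp
  then have "(deriv (deriv f) has_field_derivative 6) (at 0)"
    by (rule has_field_derivative_transform_within_open[OF _ opS]) (use D2 in auto)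
  then show "deriv (deriv (deriv f)) 0 = 6" by (rule DERIV_imp_deriv)
qed

lemma koebe_in_C: "(\<lambda>z::complex. z / (1 - z)) \<in> class_C"
  and koebe_det: "detT31 (\<lambda>z::complex. z / (1 - z)) = 0"
proof -
  define f where "f = (\<lambda>z::complex. z / (1 - z))"
  note K = koebe_derivs[folded f_def]
  have hol: "f holomorphic_on ball 0 1" unfolding f_def
    by (intro holomorphic_intros) auto
  have f0: "f 0 = 0" by (simp add: f_def)
  have df0: "deriv f 0 = 1" using K(1)[of 0] by simp
  have cond: "deriv f z \<noteq> 0 \<and> Re (1 + z * deriv (deriv f) z / deriv f z) > 0" if z: "norm z < 1" for z
  proof -
    have z1: "z \<noteq> 1" using z by auto
    have nz: "1 - z \<noteq> 0" using z1 by simp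
    have e0: "1 + w * (2 / (1 - w)^3) / (1 / (1 - w)^2) = (1 + w) / (1 - w)" if "w \<noteq> 1" for w :: complex
    proof -
      define u where "u = 1 - w"
      have wu: "w = 1 - u" by (simp add: u_def)
      have u0: "u \<noteq> 0" using that by (simp add: u_def)
      have a: "(1 - u) * (2 / u^3) / (1 / u^2) = (1 - u) * (2 / u)" using u0
        by (simp add: divide_simps power3_eq_cube power2_eq_square)
      have "1 + w * (2 / (1 - w)^3) / (1 / (1 - w)^2) = 1 + (1 - u) * (2 / u^3) / (1 / u^2)"
        by (simp add: u_def)
      also have "\<dots> = 1 + (1 - u) * (2 / u)" using a by simp
      also have "\<dots> = (1 + w) / (1 - w)" using u0 unfolding u_def by (simp add: field_simps)
      finally show ?thesis .
    qed
    have e: "1 + z * deriv (deriv f) z / deriv f z = (1 + z) / (1 - z)"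
      using e0[OF z1] by (simp add: K(1)[OF z1] K(2)[OF z1])
    have sq: "(Re z)^2 + (Im z)^2 < 1"
      using z by (simp add: cmod_power2[symmetric] power_less_one_iff)
    have den: "0 < (Re (1 - z))^2 + (Im (1 - z))^2"
      using nz by (simp add: sum_power2_gt_zero_iff complex_eq_iff)
    have "Re ((1 + z) / (1 - z)) = (1 - (Re z)^2 - (Im z)^2) / ((Re (1 - z))^2 + (Im (1 - z))^2)"
      by (simp add: Re_divide power2_eq_square algebra_simps)
    moreover have "0 < 1 - (Re z)^2 - (Im z)^2" using sq by simp
    ultimately have "Re ((1 + z) / (1 - z)) > 0" using den by simp
    then show ?thesis using e K(1)[OF z1] nz by simp
  qed
  show "(\<lambda>z::complex. z / (1 - z)) \<in> class_C"
    using hol f0 df0 cond by (simp add: class_C_def class_A_def unit_disc_def f_def[symmetric])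
  have t2: "taylor_coeff f 2 = 1"
    using K(2)[of 0] by (simp add: taylor_coeff_def numeral_2_eq_2)
  have t3: "taylor_coeff f 3 = 1"
    using K(3) by (simp add: taylor_coeff_def numeral_3_eq_3 fact_Suc)
  show "detT31 (\<lambda>z::complex. z / (1 - z)) = 0"
    unfolding f_def[symmetric] detT31_def Let_def t2 t3 by simp
qed

lemma id_in_C: "(\<lambda>z::complex. z) \<in> class_C"
  by (simp add: class_C_def class_A_def unit_disc_def)

lemma id_det: "detT31 (\<lambda>z::complex. z) = 1"
  by (simp add: detT31_def taylor_coeff_def numeral_2_eq_2 numeral_3_eq_3)

theorem theorem3:
  shows "(\<forall>f\<in>class_C. 0 \<le> detT31 f \<and> detT31 f \<le> 1)
    \<and> (\<exists>f\<in>class_C. detT31 f = 0)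
    \<and> (\<exists>f\<in>class_C. detT31 f = 1)"
  using main_bound koebe_in_C koebe_det id_in_C id_det by blast

end
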